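(* Let $p\ge2$ and let $n\ge1$ be a natural number whose tribonacci Zeckendorf representation is $[n]=\varepsilon_p\varepsilon_{p-1}\cdots\varepsilon_2$ with $\varepsilon_p=1$. Then for every word $u\in(\tau^{p-1}(c))^{\varepsilon_p}(\tau^{p-2}(c))^{\varepsilon_{p-1}}\cdots(\tau(c))^{\varepsilon_2}$, at least one of the words in $u\,\mathcal{S}_\tau$ is a prefix of some word in $\tau^p(a)$, where $\mathcal{S}_\tau=\{ab,ba,ac,ca\}$.
   Context: Tribonacci numbers: $t_0=0$, $t_1=t_2=1$, $t_n=t_{n-1}+t_{n-2}+t_{n-3}$ for $n\ge3$. Every positive integer $n$ has a unique representation $n=\sum_{i=2}^r\varepsilon_it_i$ with $\varepsilon_i\in\{0,1\}$, $\varepsilon_r=1$ and $\varepsilon_i\varepsilon_{i+1}\varepsilon_{i+2}=0$; write $[n]=\varepsilon_r\cdots\varepsilon_2$. The random tribonacci substitution is $\tau\colon a\mapsto\{ab,ba\},\ b\mapsto\{ac,ca\},\ c\mapsto\{a\}$, extended to words by set concatenation and to sets by unions; $\tau^p$ is its $p$-fold iterate. For a set $A$ of words, $A^0=\{\text{empty word}\}$, $A^k$ the $k$-fold set concatenation. Note all words in $\tau^{i-1}(c)$ have length $t_i$. *)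

theory Defs
  imports Main "HOL-Library.Sublist"
begin

fun trib :: "nat \<Rightarrow> nat" where
  "trib 0 = 0"
| "trib (Suc 0) = 1"
| "trib (Suc (Suc 0)) = 1"
| "trib (Suc (Suc (Suc n))) = trib (Suc (Suc n)) + trib (Suc n) + trib n"

definition is_trib_repr :: "nat \<Rightarrow> nat \<Rightarrow> (nat \<Rightarrow> nat) \<Rightarrow> bool" where
  "is_trib_repr n p eps \<longleftrightarrow>
     (\<forall>i\<in>{2..p}. eps i \<le> 1) \<and> eps p = 1 \<and>
     (\<forall>i. 2 \<le> i \<and> i + 2 \<le> p \<longrightarrow> eps i * eps (i+1) * eps (i+2) = 0) \<and>
     n = (\<Sum>i=2..p. eps i * trib i)"

datatype letter = A | B | C

definition setconc :: "'a list set \<Rightarrow> 'a list set \<Rightarrow> 'a list set" where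
  "setconc X Y = {u @ v | u v. u \<in> X \<and> v \<in> Y}"

definition setpow :: "'a list set \<Rightarrow> nat \<Rightarrow> 'a list set" where
  "setpow X k = ((setconc X) ^^ k) {[]}"

fun tau_letter :: "letter \<Rightarrow> letter list set" where
  "tau_letter A = {[A,B],[B,A]}"
| "tau_letter B = {[A,C],[C,A]}"
| "tau_letter C = {[A]}"

fun tau_word :: "letter list \<Rightarrow> letter list set" where
  "tau_word [] = {[]}"
| "tau_word (x # xs) = setconc (tau_letter x) (tau_word xs)"

definition tau_set :: "letter list set \<Rightarrow> letter list set" where
  "tau_set W = (\<Union>w\<in>W. tau_word w)"

definition tau_iter :: "nat \<Rightarrow> letter \<Rightarrow> letter list set" where
  "tau_iter k x = (tau_set ^^ k) {[x]}"

text \<open>(tau^(p-1)(c))^(eps p) (tau^(p-2)(c))^(eps (p-1)) ... (tau(c))^(eps 2)\<close>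
definition zeck_prod :: "nat \<Rightarrow> (nat \<Rightarrow> nat) \<Rightarrow> letter list set" where
  "zeck_prod p eps =
     foldr (\<lambda>i acc. setconc (setpow (tau_iter (i - 1) C) (eps i)) acc)
           (rev [2..<Suc p]) {[]}"

definition S_tau :: "letter list set" where
  "S_tau = {[A,B],[B,A],[A,C],[C,A]}"

end

theory Submission imports Defs begin

lemma concI: "u \<in> X \<Longrightarrow> v \<in> Y \<Longrightarrow> u @ v \<in> setconc X Y"
  by (auto simp: setconc_def)

lemma setconc_assoc: "setconc (setconc X Y) Z = setconc X (setconc Y Z)"
  unfolding setconc_def by (auto; metis append.assoc)

lemma setconc_Nil: "setconc {[]} X = X"
  by (auto simp: setconc_def)

lemma tau_word_append: "tau_word (u @ v) = setconc (tau_word u) (tau_word v)"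
  by (induction u) (simp_all add: setconc_Nil setconc_assoc)

lemma tau_set_conc: "tau_set (setconc X Y) = setconc (tau_set X) (tau_set Y)"
  unfolding tau_set_def setconc_def
  apply (auto simp: setconc_def tau_word_append)
   apply blast
  by (metis (mono_tags, lifting) tau_word_append setconc_def mem_Collect_eq)

lemma iter_conc: "(tau_set ^^ m) (setconc X Y) = setconc ((tau_set ^^ m) X) ((tau_set ^^ m) Y)"
  by (induction m) (simp_all add: tau_set_conc)

definition Wd :: "nat \<Rightarrow> letter list \<Rightarrow> letter list set" where
  "Wd m w = (tau_set ^^ m) {w}"

lemma Wd_append: "Wd m (u @ v) = setconc (Wd m u) (Wd m v)"
proof -
  have "{u @ v} = setconc {u} {v}" by (auto simp: setconc_def)
  then show ?thesis unfolding Wd_def by (simp add: iter_conc)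
qed

lemma Wd_appI: "x \<in> Wd m u \<Longrightarrow> y \<in> Wd m v \<Longrightarrow> x @ y \<in> Wd m (u @ v)"
  by (simp add: Wd_append concI)

lemma Wd3: "x \<in> Wd m [a] \<Longrightarrow> y \<in> Wd m [b] \<Longrightarrow> z \<in> Wd m [c] \<Longrightarrow> x @ y @ z \<in> Wd m [a,b,c]"
  using Wd_appI[of x m "[a]" "y@z" "[b,c]"] Wd_appI[of y m "[b]" z "[c]"] by simp

lemma iter_union: "(tau_set ^^ m) X = (\<Union>x\<in>X. (tau_set ^^ m) {x})"
proof (induction m arbitrary: X)
  case 0 then show ?case by auto
next
  case (Suc m)
  have "(tau_set ^^ Suc m) X = tau_set ((tau_set ^^ m) X)" by simp
  also have "\<dots> = tau_set (\<Union>x\<in>X. (tau_set ^^ m) {x})" using Suc.IH[of X] by (rule arg_cong)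
  also have "\<dots> = (\<Union>x\<in>X. tau_set ((tau_set ^^ m) {x}))" unfolding tau_set_def by auto
  finally show ?case by (simp only: funpow.simps comp_apply)
qed

lemma Wd_trans: "w' \<in> Wd a w \<Longrightarrow> y \<in> Wd b w' \<Longrightarrow> y \<in> Wd (b + a) w"
  unfolding Wd_def funpow_add comp_def
  by (subst iter_union) blast

lemma Wd_0: "Wd 0 w = {w}" by (simp add: Wd_def)
lemma Wd_1: "Wd 1 w = tau_word w" by (simp add: Wd_def tau_set_def)

lemma tau_word_ne: "tau_word w \<noteq> {}"
proof (induction w)
  case Nil then show ?case by simp
next
  case (Cons x w)
  then obtain v where "v \<in> tau_word w" by blast
  moreover obtain u where "u \<in> tau_letter x" by (cases x) auto
  ultimately have "u @ v \<in> tau_word (x # w)" using concI[of u "tau_letter x" v "tau_word w"] by simp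
  then show ?case by blast
qed

lemma Wd_ne: "Wd m w \<noteq> {}"
proof (induction m arbitrary: w)
  case 0 then show ?case by (simp add: Wd_0)
next
  case (Suc m)
  obtain w' where w': "w' \<in> Wd 1 w" using tau_word_ne Wd_1 by blast
  obtain y where "y \<in> Wd m w'" using Suc by blast
  then show ?case using Wd_trans[OF w'] by auto
qed

lemma tau_iter_C: "tau_iter (Suc m) C = Wd m [A]"
proof -
  have "tau_set {[C]} = {[A]}" by (simp add: tau_set_def setconc_def)
  then show ?thesis unfolding tau_iter_def Wd_def funpow_Suc_right comp_def by simp
qed

lemma tau_iter_Wd: "tau_iter m x = Wd m [x]" by (simp add: tau_iter_def Wd_def)

lemma setpow_0: "setpow X 0 = {[]}" by (simp add: setpow_def)
lemma setpow_1: "setpow X (Suc 0) = X" by (auto simp: setpow_def setconc_def)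

fun P :: "(nat \<Rightarrow> nat) \<Rightarrow> nat \<Rightarrow> letter list set" where
  "P d 0 = {[]}"
| "P d (Suc k) = setconc (setpow (Wd k [A]) (d k)) (P d k)"

lemma zeck_P: "zeck_prod (Suc k) eps = P (\<lambda>j. eps (j+2)) k"
proof (induction k)
  case 0 then show ?case by (simp add: zeck_prod_def)
next
  case (Suc k)
  have "rev [2..<Suc (Suc (Suc k))] = Suc (Suc k) # rev [2..<Suc (Suc k)]" by simp
  then show ?case using Suc by (simp add: zeck_prod_def tau_iter_C)
qed

lemma P_Suc_dest: "u \<in> P d (Suc k) \<Longrightarrow> \<exists>v u1. u = v @ u1 \<and> v \<in> setpow (Wd k [A]) (d k) \<and> u1 \<in> P d k"
  by (auto simp: setconc_def)

lemma mem1: "[A,B,A,C,A,B] \<in> Wd 1 [A,B,A]"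
  unfolding Wd_1 using concI[of "[A,B]" _ "[A,C,A,B]"] concI[of "[A,C]" _ "[A,B]"] concI[of "[A,B]" _ "[]"]
  by (simp add: setconc_Nil)

lemma l1: "[A,B] \<in> Wd 1 [A]" "[B,A] \<in> Wd 1 [A]" "[A,C] \<in> Wd 1 [B]" "[C,A] \<in> Wd 1 [B]" "[A] \<in> Wd 1 [C]"
  unfolding Wd_1 by (simp_all add: setconc_def)

lemma Wd_cons: "x \<in> Wd m [a] \<Longrightarrow> y \<in> Wd m w \<Longrightarrow> x @ y \<in> Wd m (a # w)"
  using Wd_appI[of x m "[a]" y w] by simp

lemma W0: "[] \<in> Wd m []"
proof -
  have "{[]::letter list} = setconc {[]} {[]}" by (simp add: setconc_Nil)
  have "(tau_set ^^ m) {[]} = {[]}"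
    by (induction m) (simp_all add: tau_set_def)
  then show ?thesis by (simp add: Wd_def)
qed

lemma l2: "[A,B,A] \<in> Wd 2 [B]" "[A,B] \<in> Wd 2 [C]" "[B,A,A,C] \<in> Wd 2 [A]" "[A,B,A,C] \<in> Wd 2 [A]"
proof -
  have "[A,B,A] \<in> Wd 1 [A,C]" using Wd_cons[OF l1(1) Wd_cons[OF l1(5) W0]] by simp
  from Wd_trans[OF l1(3) this] show "[A,B,A] \<in> Wd 2 [B]" by (simp add: numeral_eq_Suc)
  show "[A,B] \<in> Wd 2 [C]" using Wd_trans[OF l1(5) l1(1)] by (simp add: numeral_eq_Suc)
  have "[B,A,A,C] \<in> Wd 1 [A,B]" using Wd_cons[OF l1(2) Wd_cons[OF l1(3) W0]] by simp
  from Wd_trans[OF l1(1) this] show "[B,A,A,C] \<in> Wd 2 [A]" by (simp add: numeral_eq_Suc)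
  have "[A,B,A,C] \<in> Wd 1 [A,B]" using Wd_cons[OF l1(1) Wd_cons[OF l1(3) W0]] by simp
  from Wd_trans[OF l1(1) this] show "[A,B,A,C] \<in> Wd 2 [A]" by (simp add: numeral_eq_Suc)
qed

lemma l3: "[A,B,A,C,A,B,A] \<in> Wd 3 [A]"
proof -
  have "[A,B,A,C,A,B,A] \<in> Wd 1 [A,B,A,C]"
    using Wd_cons[OF l1(1) Wd_cons[OF l1(3) Wd_cons[OF l1(1) Wd_cons[OF l1(5) W0]]]] by simp
  from Wd_trans[OF l2(4) this] show ?thesis by (simp add: numeral_eq_Suc)
qed

lemma Wd3_dest: "y \<in> Wd m [a,b,c] \<Longrightarrow> \<exists>y1 y2 y3. y = y1 @ y2 @ y3 \<and> y1 \<in> Wd m [a] \<and> y2 \<in> Wd m [b] \<and> y3 \<in> Wd m [c]"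
  using Wd_append[of m "[a]" "[b,c]"] Wd_append[of m "[b]" "[c]"]
  by (auto simp: setconc_def)

lemma E: "(\<forall>j<Suc q. d j \<le> 1) \<Longrightarrow> (\<forall>j. j+2 < Suc q \<longrightarrow> d j * d (j+1) * d (j+2) = 0)
  \<Longrightarrow> u \<in> P d (Suc q) \<Longrightarrow> \<exists>s\<in>S_tau. \<exists>y\<in>Wd q [A,B,A]. prefix (u@s) y"
proof (induction q arbitrary: u rule: less_induct)
  case (less q)
  note le1 = less.prems(1) and no3 = less.prems(2)
  obtain v u1 where u: "u = v @ u1" and v: "v \<in> setpow (Wd q [A]) (d q)" and u1: "u1 \<in> P d q"
    using P_Suc_dest[OF less.prems(3)] by blast
  have dq: "d q = 0 \<or> d q = 1" using le1 by fastforce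
  show ?case
  proof (cases q)
    case 0
    then have u1n: "u1 = []" using u1 by simp
    from dq show ?thesis
    proof
      assume "d q = 0"
      then have "u = []" using u u1n v by (simp add: setpow_0)
      moreover have "[A,B,A] \<in> Wd q [A,B,A]" using 0 by (simp add: Wd_0)
      moreover have "[A,B] \<in> S_tau" "prefix ([] @ [A,B]) [A,B,A]" by (simp_all add: S_tau_def)
      ultimately show ?thesis by blast
    next
      assume "d q = 1"
      then have "u = [A]" using u u1n v 0 by (simp add: setpow_1 Wd_0)
      moreover have "[A,B,A] \<in> Wd q [A,B,A]" using 0 by (simp add: Wd_0)
      moreover have "[B,A] \<in> S_tau" "prefix ([A] @ [B,A]) [A,B,A]" by (simp_all add: S_tau_def)
      ultimately show ?thesis by blast
    qed
  next
    case (Suc q1)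
    from dq show ?thesis
    proof
      assume "d q = 0"
      then have uu: "u = u1" using u v by (simp add: setpow_0)
      obtain s y where s: "s \<in> S_tau" and y: "y \<in> Wd q1 [A,B,A]" and pr: "prefix (u1@s) y"
        using less.IH[of q1 u1] Suc le1 no3 u1 by auto
      obtain z where z: "z \<in> Wd q1 [C,A,B]" using Wd_ne by blast
      have yz: "y @ z \<in> Wd q1 [A,B,A,C,A,B]" using Wd_appI[OF y z] by simp
      have "y @ z \<in> Wd q [A,B,A]" using Wd_trans[OF mem1 yz] Suc by simp
      moreover have "prefix (u@s) (y@z)" using prefix_prefix[OF pr] uu by simp
      ultimately show ?thesis using s by blast
    next
      assume dq1: "d q = 1"
      then have vA: "v \<in> Wd q [A]" using v by (simp add: setpow_1)
      obtain v1 u2 where u1': "u1 = v1 @ u2" and v1: "v1 \<in> setpow (Wd q1 [A]) (d q1)" and u2: "u2 \<in> P d q1"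
        using P_Suc_dest[of u1 d q1] u1 Suc by blast
      have "d q1 \<le> 1" using le1 Suc by simp
      then have dq1': "d q1 = 0 \<or> d q1 = 1" by linarith
      from dq1' show ?thesis
      proof
        assume d0: "d q1 = 0"
        then have v1n: "v1 = []" using v1 by (simp add: setpow_0)
        show ?thesis
        proof (cases q1)
          case 0
          then have "u2 = []" using u2 by simp
          then have uv: "u = v" using u u1' v1n by simp
          obtain z where z: "z \<in> Wd q [A]" using Wd_ne by blast
          have "[A,C] \<in> Wd q [B]" using l1(3) Suc 0 by simp
          from Wd3[OF vA this z] have "v @ [A,C] @ z \<in> Wd q [A,B,A]" .
          moreover have "prefix (u @ [A,C]) (v @ [A,C] @ z)" using uv by simp
          moreover have "[A,C] \<in> S_tau" by (simp add: S_tau_def)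
          ultimately show ?thesis by blast
        next
          case (Suc q2)
          obtain s y where s: "s \<in> S_tau" and y: "y \<in> Wd q2 [A,B,A]" and pr: "prefix (u2@s) y"
            using less.IH[of q2 u2] Suc \<open>q = Suc q1\<close> le1 no3 u2 by auto
          have yB: "y \<in> Wd q [B]" using Wd_trans[OF l2(1) y] Suc \<open>q = Suc q1\<close> by simp
          obtain z where z: "z \<in> Wd q [A]" using Wd_ne by blast
          from Wd3[OF vA yB z] have "v @ y @ z \<in> Wd q [A,B,A]" .
          moreover have "prefix (u @ s) (v @ y @ z)" using prefix_prefix[OF pr, of z] u u1' v1n
            by simp
          ultimately show ?thesis using s by blast
        qed
      next
        assume d1: "d q1 = 1"
        then have v1A: "v1 \<in> Wd q1 [A]" using v1 by (simp add: setpow_1)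
        show ?thesis
        proof (cases q1)
          case 0
          then have "u2 = []" using u2 by simp
          then have uv: "u = v @ [A]" using u u1' v1A 0 by (simp add: Wd_0)
          have "[A,C] \<in> Wd q [B]" "[A,B] \<in> Wd q [A]" using l1 Suc 0 by simp_all
          from Wd3[OF vA this] have "v @ [A,C] @ [A,B] \<in> Wd q [A,B,A]" .
          moreover have "prefix (u @ [C,A]) (v @ [A,C] @ [A,B])" using uv by simp
          moreover have "[C,A] \<in> S_tau" by (simp add: S_tau_def)
          ultimately show ?thesis by blast
        next
          case (Suc q2)
          have "d q2 * d (q2+1) * d (q2+2) = 0" using no3 Suc \<open>q = Suc q1\<close> by auto
          then have d2: "d q2 = 0" using d1 dq1 Suc \<open>q = Suc q1\<close> by simp
          obtain v3 u3 where u2': "u2 = v3 @ u3" and v3: "v3 \<in> setpow (Wd q2 [A]) (d q2)" and u3: "u3 \<in> P d q2"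
            using P_Suc_dest[of u2 d q2] u2 Suc by blast
          have v3n: "v3 = []" using v3 d2 by (simp add: setpow_0)
          show ?thesis
          proof (cases q2)
            case 0
            then have "u3 = []" using u3 by simp
            then have uv: "u = v @ v1" using u u1' u2' v3n by simp
            have "v1 @ [A] \<in> Wd 1 [A,C]" using Wd_cons[OF _ Wd_cons[OF l1(5) W0], of v1] v1A Suc 0 by simp
            then have m: "v1 @ [A] \<in> Wd q [B]" using Wd_trans[OF l1(3) \<open>v1 @ [A] \<in> Wd 1 [A,C]\<close>] Suc 0 \<open>q = Suc q1\<close> by simp
            have "[B,A,A,C] \<in> Wd q [A]" using l2(3) Suc 0 \<open>q = Suc q1\<close> by (simp add: numeral_eq_Suc)
            from Wd3[OF vA m this] have "v @ (v1 @ [A]) @ [B,A,A,C] \<in> Wd q [A,B,A]" .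
            moreover have "prefix (u @ [A,B]) (v @ (v1 @ [A]) @ [B,A,A,C])" using uv by simp
            moreover have "[A,B] \<in> S_tau" by (simp add: S_tau_def)
            ultimately show ?thesis by blast
          next
            case (Suc q3)
            obtain s y where s: "s \<in> S_tau" and y: "y \<in> Wd q3 [A,B,A]" and pr: "prefix (u3@s) y"
              using less.IH[of q3 u3] Suc \<open>q1 = Suc q2\<close> \<open>q = Suc q1\<close> le1 no3 u3 by auto
            obtain y1 y2 y3 where yy: "y = y1 @ y2 @ y3" and y1: "y1 \<in> Wd q3 [A]"
              and y2: "y2 \<in> Wd q3 [B]" and y3: "y3 \<in> Wd q3 [A]" using Wd3_dest[OF y] by blast
            have "y1 @ y2 \<in> Wd q3 [A,B]" using Wd_cons[OF y1 Wd_cons[OF y2 W0]] by simp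
            then have "y1 @ y2 \<in> Wd q1 [C]" using Wd_trans[OF l2(2) \<open>y1 @ y2 \<in> Wd q3 [A,B]\<close>] Suc \<open>q1 = Suc q2\<close> by (simp add: numeral_eq_Suc)
            then have "v1 @ y1 @ y2 \<in> Wd q1 [A,C]" using Wd_cons[OF v1A Wd_cons[OF \<open>y1 @ y2 \<in> Wd q1 [C]\<close> W0]] by simp
            then have m: "v1 @ y1 @ y2 \<in> Wd q [B]" using Wd_trans[OF l1(3) \<open>v1 @ y1 @ y2 \<in> Wd q1 [A,C]\<close>] \<open>q = Suc q1\<close> by simp
            obtain r where r: "r \<in> Wd q3 [B,A,C,A,B,A]" using Wd_ne by blast
            have "y3 @ r \<in> Wd q3 [A,B,A,C,A,B,A]" using Wd_cons[OF y3 r] by simp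
            then have t: "y3 @ r \<in> Wd q [A]" using Wd_trans[OF l3 \<open>y3 @ r \<in> Wd q3 [A,B,A,C,A,B,A]\<close>] Suc \<open>q1 = Suc q2\<close> \<open>q = Suc q1\<close> by (simp add: numeral_eq_Suc)
            from Wd3[OF vA m t] have "v @ (v1 @ y1 @ y2) @ (y3 @ r) \<in> Wd q [A,B,A]" .
            moreover have "prefix (u @ s) (v @ (v1 @ y1 @ y2) @ (y3 @ r))"
            proof -
              have "prefix (u3 @ s) (y1 @ y2 @ y3 @ r)" using prefix_prefix[OF pr, of r] yy
                by simp
              then show ?thesis using u u1' u2' v3n by simp
            qed
            ultimately show ?thesis using s by blast
          qed
        qed
      qed
    qed
  qed
qed

theorem mainTheorem6:
  fixes p n :: nat and eps :: "nat \<Rightarrow> nat" and u :: "letter list"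
  assumes "p \<ge> 2" and "n \<ge> 1"
    and "is_trib_repr n p eps"
    and "u \<in> zeck_prod p eps"
  shows "\<exists>s\<in>S_tau. \<exists>w\<in>tau_iter p A. prefix (u @ s) w"
proof -
  define q where "q = p - 2"
  have p: "p = Suc (Suc q)" using assms(1) q_def by simp
  define d where "d = (\<lambda>j. eps (j+2))"
  have uP: "u \<in> P d (Suc q)" using assms(4) zeck_P[of "Suc q" eps] p d_def by simp
  have b1: "\<forall>i\<in>{2..p}. eps i \<le> 1" using assms(3) unfolding is_trib_repr_def by blast
  have le1: "\<forall>j<Suc q. d j \<le> 1"
  proof (intro allI impI)
    fix j assume "j < Suc q"
    then have "j + 2 \<in> {2..p}" using p by simp
    then show "d j \<le> 1" using b1 d_def by blast
  qed
  have no3: "\<forall>j. j+2 < Suc q \<longrightarrow> d j * d (j+1) * d (j+2) = 0"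
  proof (intro allI impI)
    fix j assume "j+2 < Suc q"
    moreover have "\<forall>i. 2 \<le> i \<and> i + 2 \<le> p \<longrightarrow> eps i * eps (i+1) * eps (i+2) = 0"
      using assms(3) unfolding is_trib_repr_def by blast
    moreover have "2 \<le> j+2 \<and> j+2+2 \<le> p" using p \<open>j+2 < Suc q\<close> by simp
    ultimately have "eps (j+2) * eps (j+2+1) * eps (j+2+2) = 0" by blast
    then show "d j * d (j+1) * d (j+2) = 0" by (simp add: d_def algebra_simps)
  qed
  obtain s y where s: "s \<in> S_tau" and y: "y \<in> Wd q [A,B,A]" and pr: "prefix (u@s) y"
    using E[OF le1 no3 uP] by blast
  have "y @ [] \<in> Wd q [A,B,A]" using y by simp
  obtain z where z: "z \<in> Wd q [C]" using Wd_ne by blast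
  have "y @ z \<in> Wd q [A,B,A,C]" using Wd_appI[OF y z] by simp
  then have "y @ z \<in> tau_iter p A" using Wd_trans[OF l2(4) \<open>y @ z \<in> Wd q [A,B,A,C]\<close>] p tau_iter_Wd by (simp add: numeral_eq_Suc)
  moreover have "prefix (u@s) (y@z)" using prefix_prefix[OF pr] by simp
  ultimately show ?thesis using s by blast
qed

end
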